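(* Let $m$ be a positive integer and let $M$ be an $N\times N$ Hermitian matrix with zero diagonal whose off-diagonal entries are each either $0$ or an $m$-th root of unity, and suppose $M$ is weighted-walk-regular, i.e. $M^k$ has constant diagonal for every $k=1,\ldots,N-1$. Then the continuous quantum walk $U(t)=\exp(itM)$ is periodic at some vertex if and only if it is periodic at every vertex, and this happens if and only if all eigenvalues of $M$ are integer multiples of $\sqrt\Delta$ for some square-free positive integer $\Delta$.
   Context: The walk $U(t)=\exp(itM)$ is periodic at vertex $a$ if there exist a time $t\neq0$ and a complex number $\alpha$ with $U(t)e_a=\alpha e_a$, where $e_a$ is the standard basis vector. *)

theory Defs
  imports Complex_Main "HOL-Computational_Algebra.Squarefree" "Jordan_Normal_Form.Char_Poly"
begin

definition hermitian_mat :: "complex mat \<Rightarrow> bool" where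
  "hermitian_mat M \<longleftrightarrow> dim_col M = dim_row M \<and>
     (\<forall>i < dim_row M. \<forall>j < dim_row M. M $$ (j, i) = cnj (M $$ (i, j)))"

definition mat_exp :: "complex mat \<Rightarrow> complex mat" where
  "mat_exp A = mat (dim_row A) (dim_col A) (\<lambda>(i, j). \<Sum>k. (A ^\<^sub>m k) $$ (i, j) / of_nat (fact k))"

definition walk :: "complex mat \<Rightarrow> real \<Rightarrow> complex mat" where
  "walk M t = mat_exp ((\<i> * complex_of_real t) \<cdot>\<^sub>m M)"

definition periodic_at :: "complex mat \<Rightarrow> nat \<Rightarrow> bool" where
  "periodic_at M a \<longleftrightarrow> (\<exists>t::real. t \<noteq> 0 \<and> (\<exists>\<alpha>::complex.
      walk M t *\<^sub>v unit_vec (dim_row M) a = \<alpha> \<cdot>\<^sub>v unit_vec (dim_row M) a))"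

end

theory Submission
  imports Defs "Jordan_Normal_Form.Schur_Decomposition"
begin

lemma cprod_self_real:
  fixes w :: "complex vec"
  shows "w \<bullet>c w = complex_of_real (Re (w \<bullet>c w)) \<and> Re (w \<bullet>c w) \<ge> 0"
proof -
  have "0 \<le> w \<bullet>c w" by (rule conjugate_square_ge_0_vec)
  thus ?thesis by (simp add: less_eq_complex_def complex_eq_iff)
qed

lemma smult_cprod:
  fixes x y :: "complex vec"
  assumes "x \<in> carrier_vec n" "y \<in> carrier_vec n"
  shows "(a \<cdot>\<^sub>v x) \<bullet>c (b \<cdot>\<^sub>v y) = a * cnj b * (x \<bullet>c y)"
  using assms unfolding scalar_prod_def
  by (auto simp: sum_distrib_left intro!: sum.cong)

lemma onb_exists:
  fixes v :: "complex vec"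
  assumes v: "v \<in> carrier_vec n" and v1: "v \<bullet>c v = 1"
  shows "\<exists>ws. length ws = n \<and> set ws \<subseteq> carrier_vec n \<and> hd ws = v \<and>
    (\<forall>i<n. \<forall>j<n. ws!i \<bullet>c ws!j = (if i = j then 1 else 0))"
proof -
  interpret cof_vec_space n "TYPE(complex)" .
  have v0: "v \<noteq> 0\<^sub>v n" using v1 by auto
  define b where "b = basis_completion v"
  note bc = basis_completion[OF v v0, folded b_def]
  define us where "us = gram_schmidt n b"
  note gs = gram_schmidt_result[OF bc(2) bc(4) bc(5) us_def]
  obtain vs where bv: "b = v # vs" unfolding b_def basis_completion_def Let_def by auto
  have hdus: "hd us = v" unfolding us_def bv using v by simp
  define nrm where "nrm = (\<lambda>w::complex vec. complex_of_real (1 / sqrt (Re (w \<bullet>c w))) \<cdot>\<^sub>v w)"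
  define ws where "ws = map nrm us"
  have lus: "length us = n" using gs(4) bc(6) by simp
  have cus: "\<And>i. i < n \<Longrightarrow> us!i \<in> carrier_vec n" using gs(3) lus by auto
  have "nrm v = v" unfolding nrm_def using v1 by simp
  hence hd: "hd ws = v" unfolding ws_def using hdus lus v0
    by (cases us) auto
  have orth: "ws!i \<bullet>c ws!j = (if i = j then 1 else 0)" if i: "i < n" and j: "j < n" for i j
  proof -
    have wi: "ws!i = nrm (us!i)" "ws!j = nrm (us!j)" using i j lus by (auto simp: ws_def)
    have "ws!i \<bullet>c ws!j = complex_of_real (1 / sqrt (Re (us!i \<bullet>c us!i))) *
        cnj (complex_of_real (1 / sqrt (Re (us!j \<bullet>c us!j)))) * (us!i \<bullet>c us!j)"
      unfolding wi nrm_def by (rule smult_cprod[OF cus[OF i] cus[OF j]])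
    also have "\<dots> = (if i = j then 1 else 0)"
    proof (cases "i = j")
      case True
      have ne: "us!i \<bullet>c us!i \<noteq> 0" using corthogonalD[OF gs(2), of i i] i lus by auto
      obtain r where r: "us!i \<bullet>c us!i = complex_of_real r" "r \<ge> 0"
        using cprod_self_real by blast
      with ne have "r > 0" by auto
      with True r show ?thesis
        by (simp add: field_simps flip: of_real_mult)
    next
      case False
      then show ?thesis using corthogonalD[OF gs(2), of i j] i j lus by auto
    qed
    finally show ?thesis .
  qed
  have "length ws = n" using lus ws_def by simp
  moreover have "set ws \<subseteq> carrier_vec n" using gs(3) unfolding ws_def nrm_def by auto
  ultimately show ?thesis using hd orth by blast
qed

definition adj :: "complex mat \<Rightarrow> complex mat" where
  "adj A = mat (dim_col A) (dim_row A) (\<lambda>(i,j). cnj (A $$ (j,i)))"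

definition dg :: "nat \<Rightarrow> (nat \<Rightarrow> complex) \<Rightarrow> complex mat" where
  "dg n f = mat n n (\<lambda>(i,j). if i = j then f i else 0)"

lemma adj_carrier[simp]: "A \<in> carrier_mat n m \<Longrightarrow> adj A \<in> carrier_mat m n"
  by (auto simp: adj_def)
lemma adj_dims[simp]: "dim_row (adj A) = dim_col A" "dim_col (adj A) = dim_row A"
  by (auto simp: adj_def)
lemma adj_index[simp]: "i < dim_col A \<Longrightarrow> j < dim_row A \<Longrightarrow> adj A $$ (i,j) = cnj (A $$ (j,i))"
  by (auto simp: adj_def)
lemma dg_carrier[simp]: "dg n f \<in> carrier_mat n n" by (auto simp: dg_def)
lemma dg_dims[simp]: "dim_row (dg n f) = n" "dim_col (dg n f) = n" by (auto simp: dg_def)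

lemma mult_index_sum:
  assumes "A \<in> carrier_mat n k" "B \<in> carrier_mat k m" "i < n" "j < m"
  shows "(A * B) $$ (i,j) = (\<Sum>l<k. A $$ (i,l) * B $$ (l,j))"
  using assms by (auto simp: scalar_prod_def atLeast0LessThan intro!: sum.cong)

lemma adj_mult_index:
  assumes "A \<in> carrier_mat k n" "B \<in> carrier_mat k m" "i < n" "j < m"
  shows "(adj A * B) $$ (i,j) = (\<Sum>l<k. cnj (A $$ (l,i)) * B $$ (l,j))"
  using assms by (subst mult_index_sum[of _ n k]) auto

lemma UDV_index:
  assumes "X \<in> carrier_mat n n" "Y \<in> carrier_mat n n" "i < n" "j < n"
  shows "(X * dg n f * adj Y) $$ (i,j) = (\<Sum>p<n. X $$ (i,p) * f p * cnj (Y $$ (j,p)))"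
proof -
  have XD: "X * dg n f \<in> carrier_mat n n" using assms by auto
  have e: "(X * dg n f) $$ (i,p) = X $$ (i,p) * f p" if "p < n" for p
  proof -
    have "(X * dg n f) $$ (i,p) = (\<Sum>l<n. X $$ (i,l) * dg n f $$ (l,p))"
      using assms that by (intro mult_index_sum) auto
    also have "\<dots> = (\<Sum>l<n. if l = p then X $$ (i,l) * f p else 0)"
      using that by (intro sum.cong) (auto simp: dg_def)
    also have "\<dots> = X $$ (i,p) * f p" using that by simp
    finally show ?thesis .
  qed
  have "(X * dg n f * adj Y) $$ (i,j) = (\<Sum>l<n. (X * dg n f) $$ (i,l) * adj Y $$ (l,j))"
    by (rule mult_index_sum[OF XD]) (use assms in auto)
  also have "\<dots> = (\<Sum>p<n. X $$ (i, p) * f p * cnj (Y $$ (j, p)))"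
    using assms by (intro sum.cong refl) (simp add: e del: index_mult_mat)
  finally show ?thesis .
qed

lemma adj_mult: assumes "A \<in> carrier_mat n k" "B \<in> carrier_mat k m"
  shows "adj (A * B) = adj B * adj A"
proof (rule eq_matI)
  fix i j assume ij: "i < dim_row (adj B * adj A)" "j < dim_col (adj B * adj A)"
  hence ij': "i < m" "j < n" using assms by auto
  have "adj (A * B) $$ (i,j) = cnj ((A * B) $$ (j,i))" using assms ij' by simp
  also have "\<dots> = cnj (\<Sum>l<k. A $$ (j,l) * B $$ (l,i))"
    by (subst mult_index_sum[OF assms]) (use ij' in auto)
  also have "\<dots> = (\<Sum>l<k. adj B $$ (i,l) * adj A $$ (l,j))"
    using assms ij' by (auto simp: mult.commute intro!: sum.cong)
  also have "\<dots> = (adj B * adj A) $$ (i,j)"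
    by (rule mult_index_sum[symmetric, of _ m k _ n]) (use assms ij' in auto)
  finally show "adj (A * B) $$ (i,j) = (adj B * adj A) $$ (i,j)" .
qed (use assms in auto)

lemma adj_adj_index:
  assumes "W \<in> carrier_mat n n" "X \<in> carrier_mat n n" "i < n" "j < n"
  shows "(adj W * X * W) $$ (i,j) = (\<Sum>k<n. \<Sum>l<n. cnj (W $$ (k,i)) * X $$ (k,l) * W $$ (l,j))"
proof -
  have "(adj W * X * W) $$ (i,j) = (\<Sum>l<n. (adj W * X) $$ (i,l) * W $$ (l,j))"
    using assms by (intro mult_index_sum[of _ n n _ n]) auto
  also have "\<dots> = (\<Sum>l<n. (\<Sum>k<n. cnj (W $$ (k,i)) * X $$ (k,l)) * W $$ (l,j))"
    using assms by (intro sum.cong refl) (simp add: adj_mult_index[of _ n n _ n] del: index_mult_mat)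
  also have "\<dots> = (\<Sum>k<n. \<Sum>l<n. cnj (W $$ (k,i)) * X $$ (k,l) * W $$ (l,j))"
    by (simp add: sum_distrib_right) (rule sum.swap)
  finally show ?thesis .
qed

lemma hermitian_conj:
  assumes "W \<in> carrier_mat n n" "X \<in> carrier_mat n n" "hermitian_mat X"
  shows "hermitian_mat (adj W * X * W)"
proof -
  have h: "\<And>i j. i < n \<Longrightarrow> j < n \<Longrightarrow> X $$ (j,i) = cnj (X $$ (i,j))"
    using assms(2,3) unfolding hermitian_mat_def carrier_mat_def by blast
  have c: "adj W * X * W \<in> carrier_mat n n" using assms by auto
  show ?thesis unfolding hermitian_mat_def
  proof (intro conjI allI impI)
    show "dim_col (adj W * X * W) = dim_row (adj W * X * W)" using c by auto
    fix i j assume "i < dim_row (adj W * X * W)" "j < dim_row (adj W * X * W)"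
    hence ij: "i < n" "j < n" using c by auto
    have "cnj ((adj W * X * W) $$ (i, j)) = (\<Sum>k<n. \<Sum>l<n. W $$ (k,i) * cnj (X $$ (k,l)) * cnj (W $$ (l,j)))"
      unfolding adj_adj_index[OF assms(1,2) ij] by simp
    also have "\<dots> = (\<Sum>k<n. \<Sum>l<n. W $$ (k,i) * X $$ (l,k) * cnj (W $$ (l,j)))"
      by (intro sum.cong refl) (subst h, auto)
    also have "\<dots> = (\<Sum>l<n. \<Sum>k<n. W $$ (k,i) * X $$ (l,k) * cnj (W $$ (l,j)))"
      by (rule sum.swap)
    also have "\<dots> = (adj W * X * W) $$ (j, i)"
      unfolding adj_adj_index[OF assms(1,2) ij(2,1)] by (intro sum.cong refl) (simp add: ac_simps)
    finally show "(adj W * X * W) $$ (j, i) = cnj ((adj W * X * W) $$ (i, j))" by simp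
  qed
qed

lemma hermitianD: "hermitian_mat X \<Longrightarrow> X \<in> carrier_mat n n \<Longrightarrow> i < n \<Longrightarrow> j < n \<Longrightarrow>
  X $$ (j,i) = cnj (X $$ (i,j))"
  unfolding hermitian_mat_def carrier_mat_def by blast

lemma cprod_sum: "x \<in> carrier_vec n \<Longrightarrow> y \<in> carrier_vec n \<Longrightarrow>
  x \<bullet>c y = (\<Sum>l<n. x $ l * cnj (y $ l))"
  unfolding scalar_prod_def by (auto simp: atLeast0LessThan intro!: sum.cong)

lemma assoc3: "A \<in> carrier_mat n n \<Longrightarrow> B \<in> carrier_mat n n \<Longrightarrow> C \<in> carrier_mat n n \<Longrightarrow>
   A * B * C = A * (B * C)" by (rule assoc_mult_mat)

lemma spectral:
  assumes "A \<in> carrier_mat n n" "hermitian_mat A"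
  shows "\<exists>U lam. U \<in> carrier_mat n n \<and> adj U * U = 1\<^sub>m n \<and> U * adj U = 1\<^sub>m n \<and>
           A = U * dg n (\<lambda>i. complex_of_real (lam i)) * adj U"
  using assms
proof (induction n arbitrary: A)
  case 0
  show ?case
    apply (rule exI[of _ "1\<^sub>m 0"], rule exI[of _ "\<lambda>_. 0"])
    using 0 by (auto intro!: eq_matI)
next
  case (Suc n)
  note A = Suc.prems(1) and hA = Suc.prems(2)
  obtain as where cp: "char_poly A = (\<Prod>a\<leftarrow>as. [:-a,1:])" and las: "length as = Suc n"
    using char_poly_factorized[OF A] by blast
  define e where "e = hd as"
  have "poly (char_poly A) e = 0" unfolding cp e_def using las by (cases as) auto
  hence "eigenvalue A e" using eigenvalue_root_char_poly[OF A] by simp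
  then obtain v where v: "v \<in> carrier_vec (Suc n)" "v \<noteq> 0\<^sub>v (Suc n)" "A *\<^sub>v v = e \<cdot>\<^sub>v v"
    unfolding eigenvalue_def eigenvector_def using A by auto
  obtain r where r: "v \<bullet>c v = complex_of_real r" "r \<ge> 0" using cprod_self_real by blast
  have "r \<noteq> 0" using r v conjugate_square_eq_0_vec[OF v(1)] by auto
  with r have rp: "r > 0" by auto
  define v1 where "v1 = complex_of_real (1/sqrt r) \<cdot>\<^sub>v v"
  have v1c: "v1 \<in> carrier_vec (Suc n)" using v unfolding v1_def by auto
  have "v1 \<bullet>c v1 = complex_of_real (1/sqrt r) * cnj (complex_of_real (1/sqrt r)) * (v \<bullet>c v)"
    unfolding v1_def by (rule smult_cprod[OF v(1) v(1)])
  also have "\<dots> = 1" using rp r by (simp add: field_simps flip: of_real_mult)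
  finally have v11: "v1 \<bullet>c v1 = 1" .
  have Av1: "A *\<^sub>v v1 = e \<cdot>\<^sub>v v1"
    unfolding v1_def mult_mat_vec[OF A v(1)] v(3) by (rule eq_vecI) auto
  obtain ws where ws: "length ws = Suc n" "set ws \<subseteq> carrier_vec (Suc n)" "hd ws = v1"
    and won: "\<And>i j. i < Suc n \<Longrightarrow> j < Suc n \<Longrightarrow> ws!i \<bullet>c ws!j = (if i = j then 1 else 0)"
    using onb_exists[OF v1c v11] by blast
  have wsc: "\<And>i. i < Suc n \<Longrightarrow> ws!i \<in> carrier_vec (Suc n)" using ws by auto
  have ws0: "ws!0 = v1" using ws by (cases ws) auto
  define W where "W = mat_of_cols (Suc n) ws"
  have W: "W \<in> carrier_mat (Suc n) (Suc n)" unfolding W_def using ws by auto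
  have Wij: "\<And>i j. i < Suc n \<Longrightarrow> j < Suc n \<Longrightarrow> W $$ (i,j) = ws!j $ i"
    unfolding W_def using ws by (simp add: mat_of_cols_index)
  have WW: "adj W * W = 1\<^sub>m (Suc n)"
  proof (rule eq_matI)
    fix i j assume "i < dim_row (1\<^sub>m (Suc n))" "j < dim_col (1\<^sub>m (Suc n))"
    hence ij: "i < Suc n" "j < Suc n" by auto
    have "(adj W * W) $$ (i,j) = (\<Sum>l<Suc n. cnj (W $$ (l,i)) * W $$ (l,j))"
      by (rule adj_mult_index[OF W W ij])
    also have "\<dots> = ws!j \<bullet>c ws!i"
      using ij by (simp add: cprod_sum[OF wsc wsc] Wij mult.commute)
    also have "\<dots> = 1\<^sub>m (Suc n) $$ (i,j)" using won ij by auto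
    finally show "(adj W * W) $$ (i,j) = 1\<^sub>m (Suc n) $$ (i,j)" .
  qed (use W in auto)
  have WW': "W * adj W = 1\<^sub>m (Suc n)" using mat_mult_left_right_inverse[OF adj_carrier[OF W] W WW] .
  define A' where "A' = adj W * A * W"
  have A'c: "A' \<in> carrier_mat (Suc n) (Suc n)" unfolding A'_def using W A by auto
  have hA': "hermitian_mat A'" unfolding A'_def by (rule hermitian_conj[OF W A hA])
  have col0: "A' $$ (i,0) = (if i = 0 then e else 0)" if i: "i < Suc n" for i
  proof -
    have "A' $$ (i,0) = (\<Sum>k<Suc n. \<Sum>l<Suc n. cnj (W $$ (k,i)) * A $$ (k,l) * W $$ (l,0))"
      unfolding A'_def by (rule adj_adj_index[OF W A i]) simp
    also have "\<dots> = (\<Sum>k<Suc n. cnj (ws!i $ k) * (A *\<^sub>v v1) $ k)"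
    proof (rule sum.cong[OF refl])
      fix k assume k: "k \<in> {..<Suc n}"
      have "(A *\<^sub>v v1) $ k = (\<Sum>l<Suc n. A $$ (k,l) * v1 $ l)"
        using k A v1c by (auto simp: scalar_prod_def atLeast0LessThan intro!: sum.cong)
      thus "(\<Sum>l<Suc n. cnj (W $$ (k,i)) * A $$ (k,l) * W $$ (l,0)) = cnj (ws!i $ k) * (A *\<^sub>v v1) $ k"
        using k i by (simp add: Wij ws0 sum_distrib_left mult.assoc del: sum.lessThan_Suc)
    qed
    also have "\<dots> = (\<Sum>k<Suc n. e * (v1 $ k * cnj (ws!i $ k)))"
      using v1c by (intro sum.cong refl) (auto simp: Av1)
    also have "\<dots> = e * (ws!0 \<bullet>c ws!i)"
      by (simp add: cprod_sum[OF v1c wsc[OF i]] ws0 sum_distrib_left del: sum.lessThan_Suc)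
    also have "\<dots> = (if i = 0 then e else 0)" using won[OF _ i, of 0] by auto
    finally show ?thesis .
  qed
  have "A' $$ (0,0) = cnj (A' $$ (0,0))" using hermitianD[OF hA' A'c, of 0 0] by simp
  hence "cnj e = e" using col0[of 0] by simp
  hence eR: "e = complex_of_real (Re e)" by (simp add: complex_eq_iff)
  have row0: "A' $$ (0,j) = (if j = 0 then e else 0)" if j: "j < Suc n" for j
    using hermitianD[OF hA' A'c j, of 0] col0[OF j] \<open>cnj e = e\<close> by auto
  define A3 where "A3 = mat n n (\<lambda>(i,j). A' $$ (Suc i, Suc j))"
  have A3c: "A3 \<in> carrier_mat n n" unfolding A3_def by simp
  have hA3: "hermitian_mat A3" unfolding hermitian_mat_def A3_def
    by (auto intro!: hermitianD[OF hA' A'c])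
  obtain U3 lam3 where U3: "U3 \<in> carrier_mat n n" "adj U3 * U3 = 1\<^sub>m n" "U3 * adj U3 = 1\<^sub>m n"
    "A3 = U3 * dg n (\<lambda>i. complex_of_real (lam3 i)) * adj U3"
    using Suc.IH[OF A3c hA3] by blast
  define V where "V = mat (Suc n) (Suc n) (\<lambda>(i,j). if i = 0 \<and> j = 0 then 1 else
     if i = 0 \<or> j = 0 then 0 else U3 $$ (i - 1, j - 1))"
  define lam where "lam = (\<lambda>i. if i = 0 then Re e else lam3 (i - 1))"
  have V: "V \<in> carrier_mat (Suc n) (Suc n)" unfolding V_def by simp
  have VV: "adj V * V = 1\<^sub>m (Suc n)"
  proof (rule eq_matI)
    fix i j assume "i < dim_row (1\<^sub>m (Suc n))" "j < dim_col (1\<^sub>m (Suc n))"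
    hence ij: "i < Suc n" "j < Suc n" by auto
    have "(adj V * V) $$ (i,j) = (\<Sum>l<Suc n. cnj (V $$ (l,i)) * V $$ (l,j))"
      by (rule adj_mult_index[OF V V ij])
    also have "\<dots> = 1\<^sub>m (Suc n) $$ (i,j)"
    proof (cases i)
      case 0 then show ?thesis using ij by (cases j) (auto simp: sum.lessThan_Suc_shift V_def simp del: sum.lessThan_Suc)
    next
      case (Suc i')
      show ?thesis
      proof (cases j)
        case 0 then show ?thesis using ij Suc by (auto simp: sum.lessThan_Suc_shift V_def simp del: sum.lessThan_Suc)
      next
        case (Suc j')
        have "(adj U3 * U3) $$ (i',j') = (\<Sum>l<n. cnj (U3 $$ (l,i')) * U3 $$ (l,j'))"
          using ij \<open>i = Suc i'\<close> Suc by (intro adj_mult_index[OF U3(1) U3(1)]) auto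
        thus ?thesis using ij \<open>i = Suc i'\<close> Suc U3(2)
          by (auto simp: sum.lessThan_Suc_shift V_def simp del: sum.lessThan_Suc)
      qed
    qed
    finally show "(adj V * V) $$ (i,j) = 1\<^sub>m (Suc n) $$ (i,j)" .
  qed (use V in auto)
  have VV': "V * adj V = 1\<^sub>m (Suc n)" using mat_mult_left_right_inverse[OF adj_carrier[OF V] V VV] .
  define D where "D = dg (Suc n) (\<lambda>i. complex_of_real (lam i))"
  have Dc: "D \<in> carrier_mat (Suc n) (Suc n)" unfolding D_def by simp
  have A'V: "A' = V * D * adj V"
  proof (rule eq_matI)
    fix i j assume "i < dim_row (V * D * adj V)" "j < dim_col (V * D * adj V)"
    hence ij: "i < Suc n" "j < Suc n" using V by auto
    have "(V * D * adj V) $$ (i,j) = (\<Sum>p<Suc n. V $$ (i,p) * complex_of_real (lam p) * cnj (V $$ (j,p)))"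
      unfolding D_def by (rule UDV_index[OF V V ij])
    also have "\<dots> = A' $$ (i,j)"
    proof (cases i)
      case 0 then show ?thesis using ij row0 eR by (cases j) (auto simp: sum.lessThan_Suc_shift V_def lam_def simp del: sum.lessThan_Suc)
    next
      case (Suc i')
      show ?thesis
      proof (cases j)
        case 0 then show ?thesis using ij Suc col0 by (auto simp: sum.lessThan_Suc_shift V_def simp del: sum.lessThan_Suc)
      next
        case (Suc j')
        have "A3 $$ (i',j') = (\<Sum>p<n. U3 $$ (i',p) * complex_of_real (lam3 p) * cnj (U3 $$ (j',p)))"
          using ij \<open>i = Suc i'\<close> Suc by (subst U3(4), intro UDV_index[OF U3(1) U3(1)]) auto
        thus ?thesis using ij \<open>i = Suc i'\<close> Suc
          by (auto simp: sum.lessThan_Suc_shift V_def lam_def A3_def simp del: sum.lessThan_Suc)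
      qed
    qed
    finally show "A' $$ (i,j) = (V * D * adj V) $$ (i,j)" by simp
  qed (use A'c V in auto)
  define U where "U = W * V"
  have Uc: "U \<in> carrier_mat (Suc n) (Suc n)" unfolding U_def using W V by auto
  have aV: "adj V \<in> carrier_mat (Suc n) (Suc n)" and aW: "adj W \<in> carrier_mat (Suc n) (Suc n)"
    using V W by auto
  have adjU': "adj (W * V) = adj V * adj W" by (rule adj_mult[OF W V])
  have adjU: "adj U = adj V * adj W" unfolding U_def by (rule adjU')
  have "adj U * U = adj V * (adj W * W * V)"
    unfolding U_def adjU' using W V aV aW by (simp add: assoc3[of _ "Suc n"])
  hence UU: "adj U * U = 1\<^sub>m (Suc n)" using V VV by (simp add: WW)
  have "U * adj U = W * (V * (adj V * adj W))"
    unfolding U_def adjU' by (rule assoc_mult_mat[OF W V mult_carrier_mat[OF aV aW]])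
  also have "\<dots> = W * (V * adj V * adj W)"
    using assoc_mult_mat[OF V aV aW] by simp
  finally have "U * adj U = W * (V * adj V * adj W)" .
  hence UU': "U * adj U = 1\<^sub>m (Suc n)" using W WW' by (simp add: VV')
  have "A = W * A' * adj W"
  proof -
    have aWA: "adj W * A \<in> carrier_mat (Suc n) (Suc n)" using aW A by auto
    have "W * A' * adj W = W * (adj W * A) * W * adj W"
      unfolding A'_def using assoc_mult_mat[OF W aWA W] by simp
    also have "W * (adj W * A) = W * adj W * A" using assoc_mult_mat[OF W aW A] by simp
    also have "\<dots> = A" using WW' A by simp
    also have "A * W * adj W = A * (W * adj W)" using assoc_mult_mat[OF A W aW] by simp
    finally show ?thesis using WW' A by simp
  qed
  also have "\<dots> = U * D * adj U"
  proof -
    have VD: "V * D \<in> carrier_mat (Suc n) (Suc n)" using V Dc by auto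
    have WVD: "W * (V * D) \<in> carrier_mat (Suc n) (Suc n)" using W VD by auto
    have "W * (V * D * adj V) = W * (V * D) * adj V" using assoc_mult_mat[OF W VD aV] by simp
    hence "W * (V * D * adj V) * adj W = W * (V * D) * (adj V * adj W)"
      using assoc_mult_mat[OF WVD aV aW] by simp
    also have "W * (V * D) = W * V * D" using assoc_mult_mat[OF W V Dc] by simp
    finally show ?thesis unfolding A'V U_def adjU' .
  qed
  finally show ?case using Uc UU UU' unfolding D_def by blast
qed

lemma dg_mult: "dg n f * dg n g = dg n (\<lambda>i. f i * g i)"
proof (rule eq_matI)
  fix i j assume "i < dim_row (dg n (\<lambda>i. f i * g i))" "j < dim_col (dg n (\<lambda>i. f i * g i))"
  hence ij: "i < n" "j < n" by auto
  have "(dg n f * dg n g) $$ (i,j) = (\<Sum>l<n. dg n f $$ (i,l) * dg n g $$ (l,j))"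
    using ij by (intro mult_index_sum) auto
  also have "\<dots> = (\<Sum>l<n. if l = i then (if i = j then f i * g i else 0) else 0)"
    using ij by (intro sum.cong refl) (auto simp: dg_def)
  also have "\<dots> = dg n (\<lambda>i. f i * g i) $$ (i,j)" using ij by (simp add: dg_def)
  finally show "(dg n f * dg n g) $$ (i,j) = dg n (\<lambda>i. f i * g i) $$ (i,j)" .
qed auto

lemma dg_one: "dg n (\<lambda>_. 1) = 1\<^sub>m n"
  by (rule eq_matI) (auto simp: dg_def)

lemma pow_diag:
  assumes U: "U \<in> carrier_mat n n" and UU: "adj U * U = 1\<^sub>m n" and UU': "U * adj U = 1\<^sub>m n"
    and X: "X = U * dg n f * adj U"
  shows "X ^\<^sub>m k = U * dg n (\<lambda>i. f i ^ k) * adj U"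
proof (induction k)
  case 0
  show ?case using U UU' X by (simp add: dg_one)
next
  case (Suc k)
  have aU: "adj U \<in> carrier_mat n n" using U by auto
  define P where "P = U * dg n (\<lambda>i. f i ^ k)"
  have P: "P \<in> carrier_mat n n" unfolding P_def using U by auto
  have D: "dg n f \<in> carrier_mat n n" by simp
  have UD: "U * dg n f \<in> carrier_mat n n" using U by auto
  have "X ^\<^sub>m Suc k = P * adj U * (U * dg n f * adj U)" using Suc X P_def by simp
  also have "\<dots> = P * (adj U * (U * dg n f * adj U))"
    using assoc_mult_mat[OF P aU mult_carrier_mat[OF UD aU]] .
  also have "adj U * (U * dg n f * adj U) = adj U * (U * dg n f) * adj U"
    using assoc_mult_mat[OF aU UD aU] by simp
  also have "adj U * (U * dg n f) = dg n f"
    using assoc_mult_mat[OF aU U D] UU by simp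
  also have "P * (dg n f * adj U) = P * dg n f * adj U"
    using assoc_mult_mat[OF P D aU] by simp
  also have "P * dg n f = U * dg n (\<lambda>i. f i ^ Suc k)"
    unfolding P_def using assoc_mult_mat[OF U dg_carrier[of n "\<lambda>i. f i ^ k"] dg_carrier[of n f]]
    by (simp add: dg_mult mult.commute)
  finally show ?case .
qed

lemma smult_diag:
  assumes U: "U \<in> carrier_mat n n"
  shows "c \<cdot>\<^sub>m (U * dg n f * adj U) = U * dg n (\<lambda>i. c * f i) * adj U"
proof (rule eq_matI)
  fix i j assume "i < dim_row (U * dg n (\<lambda>i. c * f i) * adj U)" "j < dim_col (U * dg n (\<lambda>i. c * f i) * adj U)"
  hence ij: "i < n" "j < n" using U by auto
  have "(c \<cdot>\<^sub>m (U * dg n f * adj U)) $$ (i,j) = c * (U * dg n f * adj U) $$ (i,j)"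
    using ij U by simp
  also have "\<dots> = (U * dg n (\<lambda>i. c * f i) * adj U) $$ (i,j)"
    unfolding UDV_index[OF U U ij] by (simp add: sum_distrib_left ac_simps)
  finally show "(c \<cdot>\<^sub>m (U * dg n f * adj U)) $$ (i,j) = (U * dg n (\<lambda>i. c * f i) * adj U) $$ (i,j)" .
qed (use U in auto)

lemma exp_sums: "(\<lambda>n. x ^ n / fact n) sums exp (x::complex)"
proof -
  have "(\<lambda>n. x ^ n /\<^sub>R fact n) sums exp x" by (rule exp_converges)
  moreover have "(\<lambda>n. x ^ n /\<^sub>R fact n) = (\<lambda>n. x ^ n / fact n)"
    by (rule ext) (simp add: scaleR_conv_of_real divide_inverse mult.commute)
  ultimately show ?thesis by simp
qed

locale spec =
  fixes N :: nat and M U :: "complex mat" and lam :: "nat \<Rightarrow> real"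
  assumes M: "M \<in> carrier_mat N N"
    and U: "U \<in> carrier_mat N N" and UU: "adj U * U = 1\<^sub>m N" and UU': "U * adj U = 1\<^sub>m N"
    and MU: "M = U * dg N (\<lambda>i. complex_of_real (lam i)) * adj U"
begin

lemma powM: "M ^\<^sub>m k = U * dg N (\<lambda>i. complex_of_real (lam i) ^ k) * adj U"
  by (rule pow_diag[OF U UU UU' MU])

lemma powM_index: "a < N \<Longrightarrow> b < N \<Longrightarrow>
  (M ^\<^sub>m k) $$ (a,b) = (\<Sum>p<N. U $$ (a,p) * complex_of_real (lam p) ^ k * cnj (U $$ (b,p)))"
  unfolding powM by (rule UDV_index[OF U U])

lemma M_index: "a < N \<Longrightarrow> b < N \<Longrightarrow>
  M $$ (a,b) = (\<Sum>p<N. U $$ (a,p) * complex_of_real (lam p) * cnj (U $$ (b,p)))"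
  using powM_index[of a b 1] by simp

lemma orth1: "a < N \<Longrightarrow> b < N \<Longrightarrow> (\<Sum>p<N. U $$ (a,p) * cnj (U $$ (b,p))) = (if a = b then 1 else 0)"
  using powM_index[of a b 0] M by simp

lemma orth2: "p < N \<Longrightarrow> q < N \<Longrightarrow> (\<Sum>a<N. cnj (U $$ (a,p)) * U $$ (a,q)) = (if p = q then 1 else 0)"
  using adj_mult_index[OF U U, of p q] UU by simp

lemma walk_carrier: "walk M t \<in> carrier_mat N N"
  using M by (simp add: walk_def mat_exp_def)

lemma walk_index:
  assumes ab: "a < N" "b < N"
  shows "walk M t $$ (a,b) = (\<Sum>p<N. U $$ (a,p) * exp (\<i> * complex_of_real t * complex_of_real (lam p)) * cnj (U $$ (b,p)))"
proof -
  define c where "c = \<i> * complex_of_real t"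
  have pw: "((c \<cdot>\<^sub>m M) ^\<^sub>m k) $$ (a,b) = (\<Sum>p<N. U $$ (a,p) * cnj (U $$ (b,p)) * (c * complex_of_real (lam p)) ^ k)" for k
  proof -
    have "c \<cdot>\<^sub>m M = U * dg N (\<lambda>i. c * complex_of_real (lam i)) * adj U"
      unfolding MU by (rule smult_diag[OF U])
    hence "(c \<cdot>\<^sub>m M) ^\<^sub>m k = U * dg N (\<lambda>i. (c * complex_of_real (lam i)) ^ k) * adj U"
      by (rule pow_diag[OF U UU UU'])
    thus ?thesis using UDV_index[OF U U ab] by (simp add: ac_simps)
  qed
  have "(\<lambda>k. ((c \<cdot>\<^sub>m M) ^\<^sub>m k) $$ (a,b) / of_nat (fact k)) sums
     (\<Sum>p<N. U $$ (a,p) * cnj (U $$ (b,p)) * exp (c * complex_of_real (lam p)))"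
  proof -
    have "(\<lambda>k. \<Sum>p<N. U $$ (a,p) * cnj (U $$ (b,p)) * ((c * complex_of_real (lam p)) ^ k / fact k)) sums
     (\<Sum>p<N. U $$ (a,p) * cnj (U $$ (b,p)) * exp (c * complex_of_real (lam p)))"
      by (intro sums_sum sums_mult exp_sums)
    moreover have "\<And>k. ((c \<cdot>\<^sub>m M) ^\<^sub>m k) $$ (a,b) / of_nat (fact k) =
       (\<Sum>p<N. U $$ (a,p) * cnj (U $$ (b,p)) * ((c * complex_of_real (lam p)) ^ k / fact k))"
      by (simp add: pw sum_divide_distrib)
    ultimately show ?thesis by simp
  qed
  hence "walk M t $$ (a,b) = (\<Sum>p<N. U $$ (a,p) * cnj (U $$ (b,p)) * exp (c * complex_of_real (lam p)))"
    unfolding walk_def mat_exp_def c_def[symmetric] using ab M by (simp add: sums_iff)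
  thus ?thesis unfolding c_def by (simp add: ac_simps)
qed

end

context spec begin

lemma adjU_M: "adj U * M = dg N (\<lambda>i. complex_of_real (lam i)) * adj U"
proof -
  let ?D = "dg N (\<lambda>i. complex_of_real (lam i))"
  have aU: "adj U \<in> carrier_mat N N" using U by auto
  have D: "?D \<in> carrier_mat N N" by simp
  have UD: "U * ?D \<in> carrier_mat N N" using U by auto
  have "adj U * M = adj U * (U * ?D) * adj U" unfolding MU using assoc_mult_mat[OF aU UD aU] by simp
  also have "adj U * (U * ?D) = ?D" using assoc_mult_mat[OF aU U D] UU by simp
  finally show ?thesis .
qed

lemma eigen_lam: assumes "eigenvalue M ev" shows "\<exists>p<N. ev = complex_of_real (lam p)"
proof -
  let ?D = "dg N (\<lambda>i. complex_of_real (lam i))"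
  obtain v where v: "v \<in> carrier_vec N" "v \<noteq> 0\<^sub>v N" "M *\<^sub>v v = ev \<cdot>\<^sub>v v"
    using assms M unfolding eigenvalue_def eigenvector_def by auto
  have aU: "adj U \<in> carrier_mat N N" using U by auto
  define w where "w = adj U *\<^sub>v v"
  have w: "w \<in> carrier_vec N" unfolding w_def using aU v by auto
  have "U *\<^sub>v w = (U * adj U) *\<^sub>v v" unfolding w_def using assoc_mult_mat_vec[OF U aU v(1)] by simp
  hence Uw: "U *\<^sub>v w = v" using UU' v by simp
  have w0: "w \<noteq> 0\<^sub>v N"
  proof
    assume "w = 0\<^sub>v N"
    hence "U *\<^sub>v w = 0\<^sub>v N" by (intro eq_vecI) (use U in auto)
    thus False using Uw v by simp
  qed
  have "adj U *\<^sub>v (M *\<^sub>v v) = (adj U * M) *\<^sub>v v" using assoc_mult_mat_vec[OF aU M v(1)] by simp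
  also have "\<dots> = ?D *\<^sub>v w" unfolding adjU_M w_def using assoc_mult_mat_vec[OF dg_carrier aU v(1)] by simp
  finally have "?D *\<^sub>v w = ev \<cdot>\<^sub>v w" unfolding v(3) w_def using mult_mat_vec[OF aU v(1)] by simp
  moreover obtain p where p: "p < N" "w $ p \<noteq> 0" using w0 w by (metis eq_vecI carrier_vecD index_zero_vec)
  moreover have "(?D *\<^sub>v w) $ p = complex_of_real (lam p) * w $ p"
  proof -
    have "(?D *\<^sub>v w) $ p = (\<Sum>l<N. ?D $$ (p,l) * w $ l)"
      using p w by (auto simp: scalar_prod_def atLeast0LessThan intro!: sum.cong)
    also have "\<dots> = (\<Sum>l<N. if l = p then complex_of_real (lam p) * w $ l else 0)"
      using p by (intro sum.cong refl) (auto simp: dg_def)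
    finally show ?thesis using p by simp
  qed
  ultimately have "complex_of_real (lam p) * w $ p = ev * w $ p" using w by (metis index_smult_vec(1) carrier_vecD)
  thus ?thesis using p by auto
qed

lemma lam_eigen: assumes p: "p < N" shows "eigenvalue M (complex_of_real (lam p))"
proof -
  define v where "v = col U p"
  have v: "v \<in> carrier_vec N" unfolding v_def using U by auto
  have vi: "\<And>a. a < N \<Longrightarrow> v $ a = U $$ (a,p)" unfolding v_def using U p by auto
  have "v \<noteq> 0\<^sub>v N"
  proof
    assume "v = 0\<^sub>v N"
    hence "\<And>a. a < N \<Longrightarrow> U $$ (a,p) = 0" using vi by (metis index_zero_vec(1))
    hence "(\<Sum>a<N. cnj (U $$ (a,p)) * U $$ (a,p)) = 0" by simp
    thus False using orth2[OF p p] by simp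
  qed
  moreover have "M *\<^sub>v v = complex_of_real (lam p) \<cdot>\<^sub>v v"
  proof (rule eq_vecI)
    fix a assume "a < dim_vec (complex_of_real (lam p) \<cdot>\<^sub>v v)"
    hence a: "a < N" using v by simp
    have "(M *\<^sub>v v) $ a = (\<Sum>b<N. M $$ (a,b) * U $$ (b,p))"
      using a M v by (auto simp: scalar_prod_def atLeast0LessThan vi intro!: sum.cong)
    also have "\<dots> = (\<Sum>b<N. \<Sum>q<N. U $$ (a,q) * complex_of_real (lam q) * (cnj (U $$ (b,q)) * U $$ (b,p)))"
      using a by (intro sum.cong refl) (simp add: M_index sum_distrib_right sum_distrib_left ac_simps)
    also have "\<dots> = (\<Sum>q<N. U $$ (a,q) * complex_of_real (lam q) * (\<Sum>b<N. cnj (U $$ (b,q)) * U $$ (b,p)))"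
      by (subst sum.swap) (simp add: sum_distrib_left)
    also have "\<dots> = (\<Sum>q<N. if q = p then U $$ (a,q) * complex_of_real (lam q) else 0)"
      using p by (intro sum.cong refl) (simp add: orth2)
    also have "\<dots> = (complex_of_real (lam p) \<cdot>\<^sub>v v) $ a" using p a v by (simp add: vi)
    finally show "(M *\<^sub>v v) $ a = (complex_of_real (lam p) \<cdot>\<^sub>v v) $ a" .
  qed (use M v in auto)
  ultimately show ?thesis unfolding eigenvalue_def eigenvector_def using v M by auto
qed

lemma walk_unit_index: "a < N \<Longrightarrow> b < N \<Longrightarrow> (walk M t *\<^sub>v unit_vec N a) $ b = walk M t $$ (b,a)"
  using walk_carrier[of t] by simp

lemma periodic_imp:
  assumes a: "a < N" and per: "periodic_at M a"
  shows "\<exists>t. t \<noteq> 0 \<and> (\<exists>\<alpha>. \<forall>p<N. U $$ (a,p) \<noteq> 0 \<longrightarrow>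
      exp (\<i> * complex_of_real t * complex_of_real (lam p)) = \<alpha>)"
proof -
  obtain t \<alpha> where t: "t \<noteq> 0" and eq: "walk M t *\<^sub>v unit_vec N a = \<alpha> \<cdot>\<^sub>v unit_vec N a"
    using per M unfolding periodic_at_def by auto
  define E where "E = (\<lambda>p. exp (\<i> * complex_of_real t * complex_of_real (lam p)))"
  have wb: "walk M t $$ (b,a) = (if b = a then \<alpha> else 0)" if b: "b < N" for b
    using arg_cong[OF eq, of "\<lambda>x. x $ b"] walk_unit_index[OF a b, of t] b a by simp
  have "E q = \<alpha>" if q: "q < N" and nz: "U $$ (a,q) \<noteq> 0" for q
  proof -
    have "(\<Sum>b<N. cnj (U $$ (b,q)) * walk M t $$ (b,a)) = (\<Sum>b<N. if b = a then cnj (U $$ (b,q)) * \<alpha> else 0)"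
      by (intro sum.cong refl) (simp add: wb)
    also have "\<dots> = cnj (U $$ (a,q)) * \<alpha>" using a by simp
    finally have 1: "(\<Sum>b<N. cnj (U $$ (b,q)) * walk M t $$ (b,a)) = cnj (U $$ (a,q)) * \<alpha>" .
    have "(\<Sum>b<N. cnj (U $$ (b,q)) * walk M t $$ (b,a)) =
      (\<Sum>b<N. \<Sum>p<N. (cnj (U $$ (b,q)) * U $$ (b,p)) * (E p * cnj (U $$ (a,p))))"
      using a by (intro sum.cong refl) (simp add: walk_index E_def sum_distrib_left ac_simps)
    also have "\<dots> = (\<Sum>p<N. (\<Sum>b<N. cnj (U $$ (b,q)) * U $$ (b,p)) * (E p * cnj (U $$ (a,p))))"
      by (subst sum.swap) (simp add: sum_distrib_right)
    also have "\<dots> = (\<Sum>p<N. if p = q then E p * cnj (U $$ (a,p)) else 0)"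
      using q by (intro sum.cong refl) (simp add: orth2)
    also have "\<dots> = E q * cnj (U $$ (a,q))" using q by simp
    finally have "E q * cnj (U $$ (a,q)) = \<alpha> * cnj (U $$ (a,q))" using 1 by (metis mult.commute)
    thus ?thesis using nz by (metis mult_cancel_right complex_cnj_zero_iff)
  qed
  thus ?thesis using t unfolding E_def by blast
qed

lemma identity_periodic:
  assumes t: "t \<noteq> 0" and E: "\<forall>p<N. exp (\<i> * complex_of_real t * complex_of_real (lam p)) = 1"
    and a: "a < N"
  shows "periodic_at M a"
proof -
  have "walk M t *\<^sub>v unit_vec N a = 1 \<cdot>\<^sub>v unit_vec N a"
  proof (rule eq_vecI)
    fix b assume "b < dim_vec (1 \<cdot>\<^sub>v unit_vec N a)"
    hence b: "b < N" by simp
    have "(walk M t *\<^sub>v unit_vec N a) $ b = walk M t $$ (b,a)" by (rule walk_unit_index[OF a b])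
    also have "\<dots> = (\<Sum>p<N. U $$ (b,p) * cnj (U $$ (a,p)))"
      using a b E by (simp add: walk_index)
    also have "\<dots> = (1 \<cdot>\<^sub>v unit_vec N a) $ b" using orth1[OF b a] a b by auto
    finally show "(walk M t *\<^sub>v unit_vec N a) $ b = (1 \<cdot>\<^sub>v unit_vec N a) $ b" .
  qed (use walk_carrier[of t] in auto)
  thus ?thesis unfolding periodic_at_def using M t by (metis carrier_matD(1))
qed

end

context spec begin

lemma normsq: "cnj z * z = complex_of_real ((cmod z)^2)"
  by (metis complex_norm_square mult.commute)

lemma normsq2: "z * x * cnj z = complex_of_real ((cmod z)^2) * x"
  by (metis normsq mult.commute mult.assoc)

lemma colnorm: "p < N \<Longrightarrow> (\<Sum>a<N. (cmod (U $$ (a,p)))^2) = 1"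
proof -
  assume p: "p < N"
  have "complex_of_real (\<Sum>a<N. (cmod (U $$ (a,p)))^2) = (\<Sum>a<N. cnj (U $$ (a,p)) * U $$ (a,p))"
    by (simp add: normsq)
  also have "\<dots> = 1" using orth2[OF p p] by simp
  finally show ?thesis by (metis of_real_eq_1_iff)
qed

lemma diag_pow: assumes a: "a < N" shows " (M ^\<^sub>m k) $$ (a,a) = complex_of_real (\<Sum>p<N. (cmod (U $$ (a,p)))^2 * lam p ^ k)"
  unfolding powM_index[OF a a] of_real_sum by (intro sum.cong refl) (simp only: normsq2 of_real_mult of_real_power)

lemma trace_pow: "(\<Sum>a<N. (M ^\<^sub>m k) $$ (a,a)) = complex_of_real (\<Sum>p<N. lam p ^ k)"
proof -
  have "(\<Sum>a<N. (M ^\<^sub>m k) $$ (a,a)) = complex_of_real (\<Sum>a<N. \<Sum>p<N. (cmod (U $$ (a,p)))^2 * lam p ^ k)"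
    by (simp add: diag_pow)
  also have "(\<Sum>a<N. \<Sum>p<N. (cmod (U $$ (a,p)))^2 * lam p ^ k) = (\<Sum>p<N. (\<Sum>a<N. (cmod (U $$ (a,p)))^2) * lam p ^ k)"
    by (subst sum.swap) (simp add: sum_distrib_right)
  also have "\<dots> = (\<Sum>p<N. lam p ^ k)" by (simp add: colnorm)
  finally show ?thesis .
qed

lemma weight_pos:
  assumes wr: "\<forall>k \<in> {1..N - 1}. \<forall>i < N. \<forall>j < N. (M ^\<^sub>m k) $$ (i, i) = (M ^\<^sub>m k) $$ (j, j)"
    and a: "a < N" and q: "q < N"
  shows "\<exists>p<N. lam p = lam q \<and> U $$ (a,p) \<noteq> 0"
proof -
  define \<mu> where "\<mu> = lam q"
  define R where "R = lam ` {..<N} - {\<mu>}"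
  have finR: "finite R" unfolding R_def by simp
  have cardR: "card R \<le> N - 1"
  proof -
    have "\<mu> \<in> lam ` {..<N}" using q unfolding \<mu>_def by auto
    hence "card R = card (lam ` {..<N}) - 1" unfolding R_def by (simp add: card_Diff_singleton)
    also have "card (lam ` {..<N}) \<le> N" using card_image_le[of "{..<N}" lam] by simp
    finally show ?thesis by simp
  qed
  define c where "c = inverse (\<Prod>\<nu>\<in>R. (\<mu> - \<nu>))"
  define L where "L = Polynomial.smult c (\<Prod>\<nu>\<in>R. [:-\<nu>, 1:])"
  have polyL: "poly L x = c * (\<Prod>\<nu>\<in>R. (x - \<nu>))" for x :: real
    unfolding L_def by (simp add: poly_prod)
  have Lval: "poly L (lam p) = (if lam p = \<mu> then 1 else 0)" if p: "p < N" for p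
  proof (cases "lam p = \<mu>")
    case True
    have "(\<Prod>\<nu>\<in>R. (\<mu> - \<nu>)) \<noteq> 0" using finR unfolding R_def by (auto simp: prod_zero_iff)
    then show ?thesis using True by (simp add: polyL c_def)
  next
    case False
    hence "lam p \<in> R" using p unfolding R_def by auto
    hence "(\<Prod>\<nu>\<in>R. (lam p - \<nu>)) = 0" using finR by (auto simp: prod_zero_iff)
    then show ?thesis using False by (simp add: polyL)
  qed
  have degL: "degree L \<le> N - 1"
  proof -
    have "degree L \<le> degree (\<Prod>\<nu>\<in>R. [:-\<nu>, 1:])" unfolding L_def by simp
    also have "\<dots> \<le> (\<Sum>\<nu>\<in>R. degree [:-\<nu>, 1:])" using degree_prod_sum_le[OF finR, of "\<lambda>\<nu>. [:-\<nu>, 1:]"] by simp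
    also have "\<dots> = card R" by simp
    finally show ?thesis using cardR by simp
  qed
  define wgt where "wgt = (\<lambda>b. \<Sum>p<N. (cmod (U $$ (b,p)))^2 * poly L (lam p))"
  have wgt_alt: "wgt b = (\<Sum>p<N. if lam p = \<mu> then (cmod (U $$ (b,p)))^2 else 0)" for b
    unfolding wgt_def by (intro sum.cong refl) (simp add: Lval)
  have wgt_M: "complex_of_real (wgt b) = (\<Sum>k\<le>degree L. complex_of_real (coeff L k) * (M ^\<^sub>m k) $$ (b,b))"
    if b: "b < N" for b
  proof -
    have "wgt b = (\<Sum>p<N. \<Sum>k\<le>degree L. coeff L k * ((cmod (U $$ (b,p)))^2 * lam p ^ k))"
      unfolding wgt_def poly_altdef by (simp add: sum_distrib_left ac_simps)
    also have "\<dots> = (\<Sum>k\<le>degree L. coeff L k * (\<Sum>p<N. (cmod (U $$ (b,p)))^2 * lam p ^ k))"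
      by (subst sum.swap) (simp add: sum_distrib_left)
    finally show ?thesis using b by (simp add: diag_pow)
  qed
  have const: "(M ^\<^sub>m k) $$ (b,b) = (M ^\<^sub>m k) $$ (a,a)" if "k \<le> degree L" "b < N" for k b
  proof (cases "k = 0")
    case True then show ?thesis using that a M by simp
  next
    case False
    hence "k \<in> {1..N - 1}" using that degL by auto
    thus ?thesis using wr that(2) a by blast
  qed
  have weq: "wgt b = wgt a" if b: "b < N" for b
  proof -
    have "complex_of_real (wgt b) = complex_of_real (wgt a)"
      unfolding wgt_M[OF b] wgt_M[OF a] using b by (intro sum.cong refl) (simp add: const)
    thus ?thesis by simp
  qed
  have "(\<Sum>b<N. wgt b) = (\<Sum>p<N. if lam p = \<mu> then (\<Sum>b<N. (cmod (U $$ (b,p)))^2) else 0)"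
    unfolding wgt_alt by (subst sum.swap) (intro sum.cong refl, simp)
  also have "\<dots> = (\<Sum>p<N. if lam p = \<mu> then 1 else 0)" by (intro sum.cong refl) (simp add: colnorm)
  also have "\<dots> \<ge> 1"
  proof -
    have "(\<Sum>p<N. if lam p = \<mu> then 1 else (0::real)) \<ge> (\<Sum>p\<in>{q}. if lam p = \<mu> then 1 else 0)"
      using q by (intro sum_mono2) auto
    thus ?thesis by (simp add: \<mu>_def)
  qed
  finally have "1 \<le> (\<Sum>b<N. wgt b)" .
  also have "(\<Sum>b<N. wgt b) = N * wgt a" by (simp add: weq)
  finally have N1: "1 \<le> real N * wgt a" .
  have "wgt a > 0"
  proof (rule ccontr)
    assume "\<not> 0 < wgt a"
    hence "real N * wgt a \<le> 0" by (simp add: mult_nonneg_nonpos)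
    thus False using N1 by simp
  qed
  have "\<exists>p<N. (if lam p = \<mu> then (cmod (U $$ (a,p)))^2 else 0) \<noteq> 0"
  proof (rule ccontr)
    assume "\<not> ?thesis"
    hence "wgt a = 0" unfolding wgt_alt by (intro sum.neutral) auto
    thus False using \<open>wgt a > 0\<close> by simp
  qed
  then obtain p where "p < N" "(if lam p = \<mu> then (cmod (U $$ (a,p)))^2 else 0) \<noteq> 0" by blast
  thus ?thesis unfolding \<mu>_def by (auto split: if_splits)
qed

end

lemma idx_lt: "j < N \<Longrightarrow> t < r \<Longrightarrow> j*r+t < N*(r::nat)"
proof -
  assume a: "j < N" "t < r"
  have "Suc j * r \<le> N * r" using a by (intro mult_le_mono1) simp
  moreover have "j*r+t < Suc j * r" using a by simp
  ultimately show ?thesis by linarith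
qed

lemma sum_reindex_mul: fixes N r :: nat shows "(\<Sum>y<N*r. f y) = (\<Sum>j<N. \<Sum>u<r. f (j*r+u))"
proof (induction N)
  case 0 then show ?case by simp
next
  case (Suc N)
  have "(\<Sum>y<Suc N * r. f y) = (\<Sum>y\<in>{0..<N*r+r}. f y)" by (simp add: lessThan_atLeast0 add.commute)
  also have "\<dots> = (\<Sum>y\<in>{0..<N*r}. f y) + (\<Sum>y\<in>{N*r..<N*r+r}. f y)"
    by (rule sum.atLeastLessThan_concat[symmetric]) auto
  also have "(\<Sum>y\<in>{N*r..<N*r+r}. f y) = (\<Sum>u<r. f (N*r+u))"
  proof -
    have "(\<Sum>y\<in>{N*r..<N*r+r}. f y) = (\<Sum>y\<in>{0+N*r..<r+N*r}. f y)" by (simp add: add.commute)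
    also have "\<dots> = (\<Sum>u=0..<r. f (u + N*r))" by (rule sum.shift_bounds_nat_ivl)
    also have "\<dots> = (\<Sum>u<r. f (N*r+u))" by (simp add: lessThan_atLeast0 add.commute)
    finally show ?thesis .
  qed
  finally show ?case using Suc by (simp add: lessThan_atLeast0)
qed

lemma int_sq:
  fixes M :: "complex mat"
  assumes M: "M \<in> carrier_mat N N" and m: "m > 0"
    and ent: "\<forall>i<N. \<forall>j<N. M $$ (i,j) = 0 \<or> M $$ (i,j) ^ m = 1"
    and ev: "eigenvalue M x"
  shows "algebraic_int (x^2)"
proof -
  obtain v where v: "v \<in> carrier_vec N" "v \<noteq> 0\<^sub>v N" "M *\<^sub>v v = x \<cdot>\<^sub>v v"
    using ev M unfolding eigenvalue_def eigenvector_def by auto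
  define R where "R = {z::complex. z ^ m = 1}"
  have "finite R" unfolding R_def using m by (intro finite_roots_unity) simp
  then obtain rs where rs: "set rs = R" "distinct rs" using finite_distinct_list by metis
  define r where "r = length rs"
  have "1 \<in> R" unfolding R_def by simp
  have "1 \<in> set rs" using rs(1) \<open>1 \<in> R\<close> by simp
  then obtain o1 where o1: "o1 < r" "rs ! o1 = 1" unfolding r_def in_set_conv_nth by blast
  have rsR: "rs ! u ^ m = 1" if "u < r" for u
  proof -
    have "rs ! u \<in> set rs" using that unfolding r_def by simp
    thus ?thesis using rs(1) unfolding R_def by simp
  qed
  have rs_inj: "\<And>u v. u < r \<Longrightarrow> v < r \<Longrightarrow> rs ! u = rs ! v \<longleftrightarrow> u = v"
    using rs(2) unfolding r_def by (simp add: nth_eq_iff_index_eq)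
  define cond where "cond = (\<lambda>x y. M $$ (x div r, y div r) \<noteq> 0 \<and> M $$ (x div r, y div r) * rs ! (x mod r) = rs ! (y mod r))"
  define B :: "int mat" where "B = mat (N*r) (N*r) (\<lambda>(x,y). if cond x y then 1 else 0)"
  define B' :: "complex mat" where "B' = map_mat of_int B"
  have B': "B' \<in> carrier_mat (N*r) (N*r)" unfolding B'_def B_def by simp
  have B'ij: "\<And>x y. x < N*r \<Longrightarrow> y < N*r \<Longrightarrow> B' $$ (x,y) = (if cond x y then 1 else 0)"
    unfolding B'_def B_def by simp
  define w where "w = vec (N*r) (\<lambda>y. v $ (y div r) * rs ! (y mod r))"
  have w: "w \<in> carrier_vec (N*r)" unfolding w_def by simp
  have rpos: "r > 0" using o1 by simp
  obtain i0 where i0: "i0 < N" "v $ i0 \<noteq> 0" using v by (metis eq_vecI carrier_vecD index_zero_vec)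
  have w0: "w \<noteq> 0\<^sub>v (N*r)"
  proof
    assume "w = 0\<^sub>v (N*r)"
    moreover have "i0 * r + o1 < N * r"
      using i0 o1 by (intro idx_lt)
    ultimately have "w $ (i0 * r + o1) = 0" by simp
    moreover have "w $ (i0 * r + o1) = v $ i0" using \<open>i0 * r + o1 < N * r\<close> o1 rpos
      by (simp add: w_def)
    ultimately show False using i0 by simp
  qed
  have Bw: "B' *\<^sub>v w = x \<cdot>\<^sub>v w"
  proof (rule eq_vecI)
    fix y assume "y < dim_vec (x \<cdot>\<^sub>v w)"
    hence y: "y < N*r" using w by simp
    define i where "i = y div r"
    define u where "u = y mod r"
    have i: "i < N" unfolding i_def using y rpos by (simp add: less_mult_imp_div_less)
    have u: "u < r" unfolding u_def using rpos by simp
    have "(B' *\<^sub>v w) $ y = (\<Sum>z<N*r. B' $$ (y,z) * w $ z)"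
      using y B' w by (auto simp: scalar_prod_def atLeast0LessThan intro!: sum.cong)
    also have "\<dots> = (\<Sum>j<N. \<Sum>t<r. B' $$ (y, j*r+t) * w $ (j*r+t))" by (rule sum_reindex_mul)
    also have "\<dots> = (\<Sum>j<N. M $$ (i,j) * v $ j * rs ! u)"
    proof (rule sum.cong[OF refl])
      fix j assume j: "j \<in> {..<N}"
      have jt: "\<And>t. t < r \<Longrightarrow> j*r+t < N*r"
        using j by (intro idx_lt) auto
      have dm: "\<And>t. t < r \<Longrightarrow> (j*r+t) div r = j \<and> (j*r+t) mod r = t" using rpos by simp
      show "(\<Sum>t<r. B' $$ (y, j*r+t) * w $ (j*r+t)) = M $$ (i,j) * v $ j * rs ! u"
      proof (cases "M $$ (i,j) = 0")
        case True
        then show ?thesis using jt dm y by (simp add: B'ij cond_def i_def)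
      next
        case False
        hence "M $$ (i,j) ^ m = 1" using ent i j by auto
        hence "(M $$ (i,j) * rs ! u) ^ m = 1" using rsR[OF u] by (simp add: power_mult_distrib)
        hence "M $$ (i,j) * rs ! u \<in> set rs" using rs unfolding R_def by auto
        then obtain t0 where t0: "t0 < r" "rs ! t0 = M $$ (i,j) * rs ! u"
          unfolding r_def in_set_conv_nth by metis
        have "(\<Sum>t<r. B' $$ (y, j*r+t) * w $ (j*r+t)) = (\<Sum>t<r. if t = t0 then v $ j * rs ! t0 else 0)"
        proof (rule sum.cong[OF refl])
          fix t assume t: "t \<in> {..<r}"
          have "cond y (j*r+t) \<longleftrightarrow> t = t0"
            using False dm[of t] t t0 rs_inj[of t0 t] unfolding cond_def i_def[symmetric] u_def[symmetric]
            by auto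
          thus "B' $$ (y, j*r+t) * w $ (j*r+t) = (if t = t0 then v $ j * rs ! t0 else 0)"
            using jt[of t] t y dm[of t] by (auto simp: B'ij w_def)
        qed
        also have "\<dots> = M $$ (i,j) * v $ j * rs ! u" using t0 by simp
        finally show ?thesis .
      qed
    qed
    also have "\<dots> = rs ! u * (M *\<^sub>v v) $ i"
    proof -
      have "(M *\<^sub>v v) $ i = (\<Sum>j<N. M $$ (i,j) * v $ j)"
        using i M v(1) by (auto simp: scalar_prod_def atLeast0LessThan intro!: sum.cong)
      thus ?thesis by (simp add: sum_distrib_left ac_simps)
    qed
    also have "\<dots> = (x \<cdot>\<^sub>v w) $ y" using i v y w by (simp add: v(3) w_def i_def u_def)
    finally show "(B' *\<^sub>v w) $ y = (x \<cdot>\<^sub>v w) $ y" .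
  qed (use B' w in auto)
  have "(B' * B') *\<^sub>v w = B' *\<^sub>v (B' *\<^sub>v w)" using assoc_mult_mat_vec[OF B' B' w] .
  also have "\<dots> = x^2 \<cdot>\<^sub>v w" unfolding Bw using mult_mat_vec[OF B' w] Bw
    by (simp add: power2_eq_square smult_smult_assoc)
  finally have "eigenvalue (B' * B') (x^2)"
    unfolding eigenvalue_def eigenvector_def using w w0 B' by auto
  moreover have "B' * B' = map_mat of_int (B * B)"
    unfolding B'_def by (rule of_int_hom.mat_hom_mult[symmetric]) (auto simp: B_def)
  ultimately have "eigenvalue (map_mat of_int (B * B)) (x^2)" by simp
  moreover have Bc: "B \<in> carrier_mat (N*r) (N*r)" unfolding B_def by simp
  moreover have BB: "B * B \<in> carrier_mat (N*r) (N*r)" using Bc by simp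
  ultimately have "poly (char_poly (map_mat of_int (B * B))) (x^2) = 0"
    using eigenvalue_root_char_poly[of "map_mat of_int (B * B) :: complex mat" "N*r"] by simp
  hence "poly (map_poly of_int (char_poly (B * B))) (x^2) = 0"
    by (metis of_int_hom.char_poly_hom[OF BB])
  moreover have "lead_coeff (char_poly (B * B)) = 1" using degree_monic_char_poly[OF BB] by simp
  ultimately show ?thesis unfolding algebraic_int_altdef_ipoly by blast
qed

lemma sq_int:
  fixes q :: rat and D :: nat
  assumes sf: "squarefree D" and z: "q^2 * of_nat D = of_int z"
  shows "\<exists>k::int. q = of_int k"
proof -
  obtain a b where ab: "quotient_of q = (a,b)" by (cases "quotient_of q") auto
  have b: "b > 0" using quotient_of_denom_pos[OF ab] .
  have cop: "coprime a b" using quotient_of_coprime[OF ab] .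
  have q: "q = of_int a / of_int b" using quotient_of_div[OF ab] .
  have "of_int (a^2 * int D) = (of_int (z * b^2) :: rat)"
    using z b unfolding q by (simp add: field_simps power2_eq_square)
  hence eq: "a^2 * int D = z * b^2" by (simp only: of_int_eq_iff)
  have "b^2 dvd a^2 * int D" unfolding eq by simp
  moreover have "coprime (b^2) (a^2)" using cop by (simp add: coprime_commute)
  ultimately have "b^2 dvd int D" using coprime_dvd_mult_right_iff by blast
  hence "int (nat b ^ 2) dvd int D" using b by simp
  hence "nat b ^ 2 dvd D" by (simp only: int_dvd_int_iff)
  hence "nat b dvd 1" using squarefreeD[OF sf] by blast
  hence "b = 1" using b by simp
  thus ?thesis unfolding q by auto
qed

lemma NT:
  fixes x :: "nat \<Rightarrow> real" and t :: real and n :: "nat \<Rightarrow> int" and S N :: nat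
  assumes N: "N > 0" and t: "t \<noteq> 0"
    and per: "\<forall>p<N. t * (x p - x 0) = of_int (n p) * (2 * pi)"
    and tr1: "(\<Sum>p<N. x p) = 0" and tr2: "(\<Sum>p<N. (x p)^2) = real S"
    and intg: "\<forall>p<N. (x p)^2 \<in> \<rat> \<longrightarrow> (x p)^2 \<in> \<int>"
  shows "\<exists>\<Delta>::nat. \<Delta> > 0 \<and> squarefree \<Delta> \<and> (\<forall>p<N. \<exists>k::int. x p = of_int k * sqrt (real \<Delta>))"
proof (cases "\<forall>p<N. x p = 0")
  case True
  then show ?thesis by (intro exI[of _ 1]) auto
next
  case False
  then obtain p0 where p0: "p0 < N" "x p0 \<noteq> 0" by auto
  define c where "c = 2 * pi / t"
  have xp: "x p = x 0 + c * of_int (n p)" if "p < N" for p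
  proof -
    have h: "t * (x p - x 0) = of_int (n p) * (2 * pi)" using per that by blast
    have "x p - x 0 = of_int (n p) * (2 * pi) / t" using h t by (simp add: eq_divide_eq mult.commute)
    thus ?thesis unfolding c_def by (simp add: algebra_simps)
  qed
  define s where "s = (\<Sum>p<N. n p)"
  have "(\<Sum>p<N. x p) = (\<Sum>p<N. x 0 + c * of_int (n p))"
    by (rule sum.cong[OF refl], rule xp) auto
  also have "\<dots> = real N * x 0 + c * of_int s"
    unfolding s_def by (simp add: sum.distrib sum_distrib_left)
  finally have "(\<Sum>p<N. x p) = real N * x 0 + c * of_int s" .
  hence x0: "x 0 = - c * of_int s / real N" using tr1 N by (simp add: field_simps)
  define d where "d = c / real N"
  define k where "k = (\<lambda>p. int N * n p - s)"
  have xd: "x p = d * of_int (k p)" if "p < N" for p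
    using xp[OF that] x0 N unfolding d_def k_def by (simp add: field_simps)
  define K where "K = (\<Sum>p<N. (k p)^2)"
  have "(\<Sum>p<N. (x p)^2) = d^2 * of_int K"
    unfolding K_def by (simp add: xd power_mult_distrib sum_distrib_left)
  hence dK: "d^2 * of_int K = real S" using tr2 by simp
  have d0: "d \<noteq> 0" and k0: "k p0 \<noteq> 0" using xd[OF p0(1)] p0(2) by auto
  have Kpos: "K > 0"
  proof -
    have "(k p0)^2 \<le> K" unfolding K_def
      using p0(1) by (intro member_le_sum) auto
    moreover have "(k p0)^2 > 0" using k0 by simp
    ultimately show ?thesis by linarith
  qed
  have Spos: "S > 0" using dK d0 Kpos
    by (metis of_int_0_less_iff of_nat_0_less_iff zero_less_mult_iff zero_less_power2)
  define SK where "SK = S * nat K"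
  define \<Delta> where "\<Delta> = squarefree_part SK"
  define f where "f = square_part SK"
  have SKdec: "SK = \<Delta> * f^2" unfolding \<Delta>_def f_def by (rule squarefree_decompose)
  have SK0: "SK \<noteq> 0" unfolding SK_def using Spos Kpos by simp
  have Dpos: "\<Delta> > 0" unfolding \<Delta>_def by (metis gr0I squarefree_part_nonzero)
  have f0: "f \<noteq> 0" using SKdec SK0 by auto
  have sf: "squarefree \<Delta>" unfolding \<Delta>_def by simp
  define D0 where "D0 = sqrt (real \<Delta>) * real f / of_int K"
  have "d^2 = real S / of_int K" using dK Kpos by (simp add: field_simps)
  also have "\<dots> = real SK / (of_int K)^2" unfolding SK_def using Kpos by (simp add: field_simps power2_eq_square)
  also have "\<dots> = D0^2" unfolding D0_def SKdec using Kpos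
    by (simp add: field_simps power2_eq_square real_sqrt_mult_self)
  finally have "d^2 = D0^2" .
  then obtain \<sigma> :: int where \<sigma>: "d = of_int \<sigma> * D0" by (metis power2_eq_iff mult_1 mult_minus1 of_int_1 of_int_minus)
  show ?thesis
  proof (intro exI[of _ \<Delta>] conjI Dpos sf allI impI)
    fix p assume p: "p < N"
    define q :: rat where "q = of_int (\<sigma> * int f * k p) / of_int K"
    have xq: "x p = of_rat q * sqrt (real \<Delta>)"
      unfolding xd[OF p] \<sigma> D0_def q_def using Kpos by (simp add: of_rat_divide of_rat_mult field_simps)
    have "(x p)^2 = of_rat (q^2 * of_nat \<Delta>)"
      unfolding xq by (simp add: power_mult_distrib of_rat_mult of_rat_power)
    hence "(x p)^2 \<in> \<rat>" by simp
    hence "(x p)^2 \<in> \<int>" using intg p by blast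
    then obtain z where "(x p)^2 = of_int z" by (auto elim: Ints_cases)
    hence "of_rat (q^2 * of_nat \<Delta>) = (of_rat (of_int z) :: real)"
      using \<open>(x p)^2 = of_rat (q^2 * of_nat \<Delta>)\<close> by simp
    hence "q^2 * of_nat \<Delta> = of_int z" by (simp only: of_rat_eq_iff)
    then obtain kk where "q = of_int kk" using sq_int[OF sf] by blast
    thus "\<exists>k::int. x p = of_int k * sqrt (real \<Delta>)" using xq by auto
  qed
qed

lemma root_norm: assumes "(z::complex)^m = 1" "m > 0" shows "cmod z = 1"
proof -
  have "cmod z ^ m = 1 ^ m" using assms by (metis norm_power norm_one power_one)
  thus ?thesis using assms(2) power_eq_iff_eq_base[of m "cmod z" 1] by simp
qed

theorem lemma10p1:
  fixes M :: "complex mat" and N m :: nat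
  assumes "m > 0" and "N > 0"
    and "M \<in> carrier_mat N N"
    and "hermitian_mat M"
    and "\<forall>i < N. M $$ (i, i) = 0"
    and "\<forall>i < N. \<forall>j < N. i \<noteq> j \<longrightarrow> M $$ (i, j) = 0 \<or> (M $$ (i, j)) ^ m = 1"
    and "\<forall>k \<in> {1..N - 1}. \<forall>i < N. \<forall>j < N. (M ^\<^sub>m k) $$ (i, i) = (M ^\<^sub>m k) $$ (j, j)"
  shows "((\<exists>a < N. periodic_at M a) \<longleftrightarrow> (\<forall>a < N. periodic_at M a))
    \<and> ((\<forall>a < N. periodic_at M a) \<longleftrightarrow>
         (\<exists>\<Delta>::nat. \<Delta> > 0 \<and> squarefree \<Delta> \<and>
            (\<forall>ev. eigenvalue M ev \<longrightarrow> (\<exists>k::int. ev = of_int k * complex_of_real (sqrt (real \<Delta>))))))"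
proof -
  note m = assms(1) and Npos = assms(2) and Mc = assms(3) and herm = assms(4)
    and diag = assms(5) and offd = assms(6) and wr = assms(7)
  have ent: "\<forall>i<N. \<forall>j<N. M $$ (i,j) = 0 \<or> M $$ (i,j) ^ m = 1"
    using diag offd by metis
  obtain U lam where sp: "U \<in> carrier_mat N N" "adj U * U = 1\<^sub>m N" "U * adj U = 1\<^sub>m N"
    "M = U * dg N (\<lambda>i. complex_of_real (lam i)) * adj U"
    using spectral[OF Mc herm] by blast
  interpret spec N M U lam by unfold_locales (use Mc sp in auto)
  define Cond where "Cond = (\<exists>\<Delta>::nat. \<Delta> > 0 \<and> squarefree \<Delta> \<and>
            (\<forall>ev. eigenvalue M ev \<longrightarrow> (\<exists>k::int. ev = of_int k * complex_of_real (sqrt (real \<Delta>)))))"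
  have C2P: "\<forall>a<N. periodic_at M a" if C: Cond
  proof -
    obtain \<Delta> :: nat where D: "\<Delta> > 0"
      and ev: "\<forall>ev. eigenvalue M ev \<longrightarrow> (\<exists>k::int. ev = of_int k * complex_of_real (sqrt (real \<Delta>)))"
      using C unfolding Cond_def by blast
    define t where "t = 2 * pi / sqrt (real \<Delta>)"
    have sD: "sqrt (real \<Delta>) > 0" using D by simp
    have t0: "t \<noteq> 0" unfolding t_def using sD by simp
    have E: "\<forall>p<N. exp (\<i> * complex_of_real t * complex_of_real (lam p)) = 1"
    proof (intro allI impI)
      fix p assume p: "p < N"
      obtain k :: int where k: "complex_of_real (lam p) = of_int k * complex_of_real (sqrt (real \<Delta>))"
        using ev lam_eigen[OF p] by blast
      hence "complex_of_real (lam p) = complex_of_real (of_int k * sqrt (real \<Delta>))" by simp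
      hence lk: "lam p = of_int k * sqrt (real \<Delta>)" using of_real_eq_iff by blast
      have "t * lam p = 2 * pi * of_int k" unfolding t_def lk using sD by (simp add: field_simps)
      hence "exp (\<i> * complex_of_real t * complex_of_real (lam p)) = cis (2 * pi * of_int k)"
        by (simp add: cis_conv_exp mult.assoc flip: of_real_mult)
      also have "\<dots> = 1" by (simp add: cis.ctr cos_int_2pin sin_int_2pin complex_eq_iff)
      finally show "exp (\<i> * complex_of_real t * complex_of_real (lam p)) = 1" .
    qed
    show ?thesis using identity_periodic[OF t0 E] by blast
  qed
  have P2C: Cond if a: "a < N" and per: "periodic_at M a" for a
  proof -
    obtain t \<alpha> where t: "t \<noteq> 0" and Ea: "\<forall>p<N. U $$ (a,p) \<noteq> 0 \<longrightarrow>
      exp (\<i> * complex_of_real t * complex_of_real (lam p)) = \<alpha>"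
      using periodic_imp[OF a per] by blast
    define E where "E = (\<lambda>p. exp (\<i> * complex_of_real t * complex_of_real (lam p)))"
    have Eall: "E q = \<alpha>" if q: "q < N" for q
    proof -
      obtain p where p: "p < N" "lam p = lam q" "U $$ (a,p) \<noteq> 0"
        using weight_pos[OF wr a q] by blast
      thus ?thesis using Ea unfolding E_def by (metis p(2))
    qed
    have "\<forall>q. \<exists>n::int. q < N \<longrightarrow> t * (lam q - lam 0) = of_int n * (2 * pi)"
    proof (intro allI)
      fix q show "\<exists>n::int. q < N \<longrightarrow> t * (lam q - lam 0) = of_int n * (2 * pi)"
      proof (cases "q < N")
        case True
        have "E q = E 0" using Eall[OF True] Eall[OF Npos] by simp
        hence "exp (\<i> * complex_of_real (t * (lam q - lam 0))) = 1"
          unfolding E_def by (simp add: algebra_simps exp_diff)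
        hence "cis (t * (lam q - lam 0)) = 1" by (simp add: cis_conv_exp)
        hence "cos (t * (lam q - lam 0)) = 1" by (metis cis.sel(1) one_complex.sel(1))
        then obtain n :: int where "t * (lam q - lam 0) = of_int n * 2 * pi"
          using cos_one_2pi_int by blast
        thus ?thesis by (intro exI[of _ n]) simp
      qed simp
    qed
    then obtain n :: "nat \<Rightarrow> int" where n: "\<forall>q<N. t * (lam q - lam 0) = of_int (n q) * (2 * pi)"
      using choice by metis
    have tr1: "(\<Sum>p<N. lam p) = 0"
    proof -
      have "complex_of_real (\<Sum>p<N. lam p) = (\<Sum>a<N. (M ^\<^sub>m 1) $$ (a,a))" using trace_pow[of 1] by simp
      also have "\<dots> = 0" using diag Mc by simp
      finally have "complex_of_real (\<Sum>p<N. lam p) = 0" .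
      thus ?thesis by (simp only: of_real_eq_0_iff)
    qed
    define S where "S = (\<Sum>a<N. \<Sum>b<N. if M $$ (a,b) = 0 then 0 else (1::nat))"
    have tr2: "(\<Sum>p<N. (lam p)^2) = real S"
    proof -
      have M2: "M ^\<^sub>m 2 = M * M" using Mc by (simp add: numeral_2_eq_2)
      have "complex_of_real (\<Sum>p<N. (lam p)^2) = (\<Sum>a<N. (M ^\<^sub>m 2) $$ (a,a))" using trace_pow[of 2] by simp
      also have "\<dots> = (\<Sum>a<N. \<Sum>b<N. M $$ (a,b) * M $$ (b,a))"
        unfolding M2 by (intro sum.cong refl) (simp add: mult_index_sum[OF Mc Mc] del: index_mult_mat)
      also have "\<dots> = (\<Sum>a<N. \<Sum>b<N. complex_of_real (if M $$ (a,b) = 0 then 0 else 1))"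
      proof (intro sum.cong refl)
        fix a b assume a: "a \<in> {..<N}" and b: "b \<in> {..<N}"
        have "M $$ (b,a) = cnj (M $$ (a,b))" using hermitianD[OF herm Mc, of a b] a b by simp
        hence "M $$ (a,b) * M $$ (b,a) = complex_of_real ((cmod (M $$ (a,b)))^2)"
          by (metis complex_norm_square)
        moreover have "M $$ (a,b) \<noteq> 0 \<Longrightarrow> cmod (M $$ (a,b)) = 1"
          using ent a b root_norm m by auto
        ultimately show "M $$ (a,b) * M $$ (b,a) = complex_of_real (if M $$ (a,b) = 0 then 0 else 1)"
          by auto
      qed
      also have "\<dots> = complex_of_real (real S)" unfolding S_def of_nat_sum of_real_sum
        by (intro sum.cong refl) simp
      finally show ?thesis using of_real_eq_iff by blast
    qed
    have intg: "\<forall>p<N. (lam p)^2 \<in> \<rat> \<longrightarrow> (lam p)^2 \<in> \<int>"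
    proof (intro allI impI)
      fix p assume p: "p < N" and Q: "(lam p)^2 \<in> \<rat>"
      have "algebraic_int ((complex_of_real (lam p))^2)" by (rule int_sq[OF Mc m ent lam_eigen[OF p]])
      hence "algebraic_int (complex_of_real ((lam p)^2))" by simp
      hence "algebraic_int ((lam p)^2)" using algebraic_int_of_real_iff by blast
      thus "(lam p)^2 \<in> \<int>" using rational_algebraic_int_is_int Q by blast
    qed
    obtain \<Delta> :: nat where D: "\<Delta> > 0" "squarefree \<Delta>"
      and lamD: "\<forall>p<N. \<exists>k::int. lam p = of_int k * sqrt (real \<Delta>)"
      using NT[OF Npos t n tr1 tr2 intg] by blast
    show ?thesis unfolding Cond_def
    proof (intro exI[of _ \<Delta>] conjI D allI impI)
      fix ev assume "eigenvalue M ev"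
      then obtain p where p: "p < N" "ev = complex_of_real (lam p)" using eigen_lam by blast
      obtain k :: int where "lam p = of_int k * sqrt (real \<Delta>)" using lamD p(1) by blast
      thus "\<exists>k::int. ev = of_int k * complex_of_real (sqrt (real \<Delta>))" using p(2) by (intro exI[of _ k]) simp
    qed
  qed
  have 1: "(\<exists>a < N. periodic_at M a) \<longleftrightarrow> (\<forall>a < N. periodic_at M a)"
    using C2P P2C Npos by blast
  have 2: "(\<forall>a < N. periodic_at M a) \<longleftrightarrow> Cond"
    using C2P P2C Npos by blast
  show ?thesis using 1 2 unfolding Cond_def by blast
qed

end
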